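(* For every dimension $d\ge 1$ and every noise level $\delta>0$, the limit $\mathrm{OPT}_d(\infty,\delta):=\lim_{T\to\infty}\mathrm{OPT}_d(T,\delta)$ exists and \[ \mathrm{OPT}_d(\infty,\delta)=\sqrt{\frac{2d}{d+1}}\,\delta . \]
   Context: Linear reconstruction game: fix $d\ge 1$, a number of rounds $T\ge 0$ and a noise level $\delta>0$. An adversary holds a secret point $x^*\in\mathbb{R}^d$. In each round $t=1,\dots,T$ the reconstructor chooses a unit vector $v_t\in S^{d-1}$ (possibly adaptively, as a function of previous answers) and the adversary returns a real number $r_t$ with $|r_t-\langle x^*,v_t\rangle|\le\delta$. After $T$ rounds the reconstructor outputs $\hat x_T\in\mathbb{R}^d$. All strategies are deterministic. The optimal reconstruction error is $\mathrm{OPT}_d(T,\delta)=\inf_{\mathcal R}\sup_{x^*\in\mathbb{R}^d}\sup_{\mathcal A}\|\hat x_T-x^*\|_2$, where $\mathcal R$ ranges over reconstructor strategies for $T$ rounds and $\mathcal A$ over adversary answer strategies satisfying the noise constraint for the secret $x^*$. *)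

theory Defs
  imports "HOL-Analysis.Analysis" "HOL-Library.Extended_Real"
begin

text \<open>A deterministic reconstructor is a pair (Q, out): Q maps the list of answers
received so far to the next query vector, out maps the list of all T answers to
the estimate. A deterministic adversary maps the list of queries asked so far
(the last one being the current query) to its answer.\<close>

fun play :: "(real list \<Rightarrow> real^'d) \<Rightarrow> ((real^'d) list \<Rightarrow> real) \<Rightarrow> nat \<Rightarrow> real list" where
  "play Q A 0 = []"
| "play Q A (Suc n) =
     (let rs = play Q A n in rs @ [A (map (\<lambda>i. Q (take i rs)) [0..<Suc n])])"

definition valid_reconstructor :: "(real list \<Rightarrow> real^'d) \<Rightarrow> bool" where
  "valid_reconstructor Q \<longleftrightarrow> (\<forall>rs. norm (Q rs) = 1)"

definition valid_adversary :: "real \<Rightarrow> real^'d \<Rightarrow> ((real^'d) list \<Rightarrow> real) \<Rightarrow> bool" where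
  "valid_adversary \<delta> x A \<longleftrightarrow> (\<forall>qs. qs \<noteq> [] \<longrightarrow> \<bar>A qs - x \<bullet> last qs\<bar> \<le> \<delta>)"

definition OPT :: "'d::finite itself \<Rightarrow> nat \<Rightarrow> real \<Rightarrow> ereal" where
  "OPT _ T \<delta> =
     (INF QO \<in> {(Q :: real list \<Rightarrow> real^'d, out :: real list \<Rightarrow> real^'d). valid_reconstructor Q}.
        (SUP xA \<in> {(x :: real^'d, A). valid_adversary \<delta> x A}.
           ereal (norm (snd QO (play (fst QO) (snd xA) T) - fst xA))))"

end

theory Submission
  imports Defs "HOL-Analysis.Analysis"
begin


definition gmax :: "'a::euclidean_space set \<Rightarrow> 'a \<Rightarrow> real" where
  "gmax K c = Sup ((\<lambda>x. dist c x) ` K)"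

lemma gmax_props:
  assumes "compact K" "K \<noteq> {}"
  shows "\<exists>x\<in>K. gmax K c = dist c x" "\<And>y. y \<in> K \<Longrightarrow> dist c y \<le> gmax K c"
proof -
  obtain x where x: "x \<in> K" "\<And>y. y \<in> K \<Longrightarrow> dist c y \<le> dist c x"
  proof -
    have "continuous_on K (\<lambda>x. dist c x)" by (intro continuous_intros)
    then show ?thesis using continuous_attains_sup[OF assms, of "\<lambda>x. dist c x"] that by blast
  qed
  have e: "gmax K c = dist c x" unfolding gmax_def
    by (rule cSup_eq_maximum) (use x in auto)
  then show "\<exists>x\<in>K. gmax K c = dist c x" using x by auto
  show "\<And>y. y \<in> K \<Longrightarrow> dist c y \<le> gmax K c" using x e by auto
qed

lemma gmax_lip:
  assumes "compact K" "K \<noteq> {}"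
  shows "gmax K c \<le> gmax K c' + dist c c'"
proof -
  obtain x where x: "x \<in> K" "gmax K c = dist c x" using gmax_props[OF assms] by blast
  have "dist c x \<le> dist c c' + dist c' x" by (rule dist_triangle)
  also have "\<dots> \<le> dist c c' + gmax K c'" using gmax_props(2)[OF assms x(1)] by simp
  finally show ?thesis using x by simp
qed

lemma gmax_cont:
  assumes "compact K" "K \<noteq> {}"
  shows "continuous_on UNIV (gmax K)"
proof (rule lipschitz_on_continuous_on)
  show "1-lipschitz_on UNIV (gmax K)"
  proof (rule lipschitz_onI)
    fix x y
    show "dist (gmax K x) (gmax K y) \<le> 1 * dist x y"
      using gmax_lip[OF assms, of x y] gmax_lip[OF assms, of y x]
      by (simp add: dist_real_def dist_commute abs_le_iff)
  qed simp
qed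

lemma gmax_min:
  assumes "compact K" "K \<noteq> {}"
  shows "\<exists>c. \<forall>c'. gmax K c \<le> gmax K c'"
proof -
  obtain x0 where x0: "x0 \<in> K" using assms by auto
  obtain c where c: "c \<in> cball x0 (gmax K x0)" "\<And>y. y \<in> cball x0 (gmax K x0) \<Longrightarrow> gmax K c \<le> gmax K y"
    using continuous_attains_inf[OF compact_cball, of x0 "gmax K x0" "gmax K"]
      continuous_on_subset[OF gmax_cont[OF assms]]
    by (metis centre_in_cball gmax_props(2)[OF assms x0] dist_self empty_iff subset_UNIV order_trans dist_self)
  show ?thesis
  proof (intro exI allI)
    fix c'
    show "gmax K c \<le> gmax K c'"
    proof (cases "c' \<in> cball x0 (gmax K x0)")
      case True then show ?thesis using c by auto
    next
      case False
      then have "gmax K x0 < dist x0 c'" by auto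
      also have "\<dots> \<le> gmax K c'" using gmax_props(2)[OF assms x0, of c'] by (simp add: dist_commute)
      moreover have "0 \<le> gmax K x0" using gmax_props(2)[OF assms x0, of x0] by simp
      ultimately show ?thesis using c(2)[of x0] by auto
    qed
  qed
qed

lemma norm_diff_sq:
  fixes a b :: "'a::real_inner"
  shows "(norm (a - b))^2 = (norm a)^2 - 2 * inner a b + (norm b)^2"
  using dot_norm_neg[of a b] by (simp add: field_simps)

lemma contact_hull:
  fixes K :: "'a::euclidean_space set"
  assumes K: "compact K" "K \<noteq> {}" and cmin: "\<And>c'. gmax K c \<le> gmax K c'"
  shows "c \<in> convex hull {x\<in>K. dist c x = gmax K c}"
proof (rule ccontr)
  define r where "r = gmax K c"
  define C where "C = {x\<in>K. dist c x = r}"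
  assume "c \<notin> convex hull {x\<in>K. dist c x = gmax K c}"
  then have nc: "c \<notin> convex hull C" by (simp add: C_def r_def)
  have "closed {x. dist c x = r}"
    using closed_sphere[of c r] by (simp add: sphere_def)
  moreover have "C = K \<inter> {x. dist c x = r}" by (auto simp: C_def)
  ultimately have cC: "compact C" using compact_Int_closed[OF K(1)] by simp
  have "compact (convex hull C)" by (rule compact_convex_hull[OF cC])
  then obtain u b where ub: "inner u c < b" "\<And>x. x \<in> convex hull C \<Longrightarrow> b < inner u x"
  proof -
    have "closed (convex hull C)" using \<open>compact (convex hull C)\<close> by (rule compact_imp_closed)
    from separating_hyperplane_closed_point[OF convex_convex_hull this nc] show ?thesis using that by blast
  qed
  define \<eta> where "\<eta> = b - inner u c"
  have eta: "\<eta> > 0" using ub by (simp add: \<eta>_def)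
  have Cu: "\<And>x. x \<in> C \<Longrightarrow> inner u (x - c) > \<eta>"
  proof -
    fix x assume "x \<in> C"
    then have "x \<in> convex hull C" using hull_subset[of C convex] by blast
    then have "b < inner u x" by (rule ub(2))
    then show "inner u (x - c) > \<eta>" by (simp add: \<eta>_def inner_diff_right)
  qed
  have u0: "u \<noteq> 0"
  proof
    assume "u = 0"
    obtain x where "x \<in> K" "r = dist c x" using gmax_props(1)[OF K] r_def by blast
    then have "x \<in> C" by (simp add: C_def)
    then show False using Cu[of x] eta \<open>u = 0\<close> by simp
  qed
  define K2 where "K2 = {x\<in>K. inner u (x - c) \<le> \<eta>/2}"
  have "closed {x. inner u (x - c) \<le> \<eta>/2}"
    by (intro closed_Collect_le continuous_intros)
  moreover have "K2 = K \<inter> {x. inner u (x - c) \<le> \<eta>/2}" by (auto simp: K2_def)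
  ultimately have cK2: "compact K2" using compact_Int_closed[OF K(1)] by simp
  obtain r2 where r2: "r2 < r" "\<And>x. x \<in> K2 \<Longrightarrow> dist c x \<le> r2"
  proof (cases "K2 = {}")
    case True then show ?thesis using that[of "r - 1"] by auto
  next
    case False
    have "continuous_on K2 (\<lambda>x. dist c x)" by (intro continuous_intros)
    then obtain x where x: "x \<in> K2" "\<And>y. y \<in> K2 \<Longrightarrow> dist c y \<le> dist c x"
      using continuous_attains_sup[OF cK2 False, of "\<lambda>x. dist c x"] by blast
    have "x \<in> K" using x(1) by (simp add: K2_def)
    then have le: "dist c x \<le> r" using gmax_props(2)[OF K] r_def by simp
    have "x \<notin> C"
    proof
      assume "x \<in> C"
      then have "inner u (x - c) > \<eta>" by (rule Cu)
      moreover have "inner u (x - c) \<le> \<eta>/2" using x(1) by (simp add: K2_def)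
      ultimately show False using eta by linarith
    qed
    then have "dist c x \<noteq> r" using \<open>x \<in> K\<close> by (simp add: C_def)
    then show ?thesis using that[of "dist c x"] le x(2) by auto
  qed
  define t where "t = min ((r - r2) / (2 * norm u)) (\<eta> / (2 * (norm u)^2))"
  have nu: "norm u > 0" using u0 by simp
  have t0: "t > 0" using r2 eta nu by (simp add: t_def)
  have t1: "t * norm u < r - r2"
  proof -
    have "t \<le> (r - r2) / (2 * norm u)" by (simp add: t_def)
    then have "t * norm u \<le> (r - r2) / 2" using nu by (simp add: field_simps)
    then show ?thesis using r2 by simp
  qed
  have t2: "t * (norm u)^2 < \<eta>"
  proof -
    have "t \<le> \<eta> / (2 * (norm u)^2)" by (simp add: t_def)
    then have "t * (norm u)^2 \<le> \<eta> / 2" using nu by (simp add: field_simps)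
    then show ?thesis using eta by simp
  qed
  define c' where "c' = c + t *\<^sub>R u"
  have all: "dist c' x < r" if xK: "x \<in> K" for x
  proof (cases "x \<in> K2")
    case True
    have "dist c' x \<le> dist c' c + dist c x" by (rule dist_triangle)
    also have "dist c' c = t * norm u" using t0 by (simp add: c'_def dist_norm)
    finally show ?thesis using r2(2)[OF True] t1 by simp
  next
    case False
    then have iu: "inner u (x - c) > \<eta>/2" using xK by (simp add: K2_def)
    have dle: "dist c x \<le> r" using gmax_props(2)[OF K xK] r_def by simp
    have xc: "x - c' = (x - c) - t *\<^sub>R u" by (simp add: c'_def)
    have e1: "(dist c' x)^2 = (norm ((x - c) - t *\<^sub>R u))^2"
      by (metis dist_commute dist_norm xc)
    have e2: "(norm ((x - c) - t *\<^sub>R u))^2 = (norm (x - c))^2 - 2 * inner (x - c) (t *\<^sub>R u) + (norm (t *\<^sub>R u))^2"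
      by (rule norm_diff_sq)
    have e3: "inner (x - c) (t *\<^sub>R u) = t * inner u (x - c)" by (simp add: inner_commute)
    have e4: "(norm (t *\<^sub>R u))^2 = t^2 * (norm u)^2" using t0 by (simp add: power_mult_distrib)
    have "(dist c' x)^2 = (norm (x - c))^2 - 2 * t * inner u (x - c) + t^2 * (norm u)^2"
      using e1 e2 e3 e4 by simp
    also have "\<dots> < r^2"
    proof -
      have "norm (x - c) \<le> r" using dle by (simp add: dist_norm norm_minus_commute)
      then have a: "(norm (x - c))^2 \<le> r^2" by (intro power_mono) auto
      have b: "2 * t * inner u (x - c) > t * \<eta>" using iu t0 by (simp add: mult_strict_left_mono)
      have "t^2 * (norm u)^2 = t * (t * (norm u)^2)" by (simp add: power2_eq_square)
      also have "\<dots> < t * \<eta>" using t2 t0 by simp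
      finally show ?thesis using a b by linarith
    qed
    finally have "(dist c' x)^2 < r^2" .
    moreover have "r \<ge> 0" using dle zero_le_dist[of c x] by linarith
    ultimately show ?thesis by (rule power2_less_imp_less)
  qed
  obtain x where "x \<in> K" "gmax K c' = dist c' x" using gmax_props(1)[OF K] by blast
  then have "gmax K c' < r" using all by simp
  then show False using cmin[of c'] r_def by simp
qed

lemma half_le: "2 * a \<le> (b::real) \<Longrightarrow> a \<le> b / 2" by simp

lemma jung:
  fixes K :: "'a::euclidean_space set"
  assumes K: "compact K" "K \<noteq> {}" and D: "\<And>x y. x \<in> K \<Longrightarrow> y \<in> K \<Longrightarrow> dist x y \<le> D"
  shows "\<exists>c. \<forall>x\<in>K. dist c x \<le> sqrt (real DIM('a) / (2 * (real DIM('a) + 1))) * D"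
proof -
  define n where "n = real DIM('a)"
  obtain c where cmin: "\<And>c'. gmax K c \<le> gmax K c'" using gmax_min[OF K] by blast
  define r where "r = gmax K c"
  have ch: "c \<in> convex hull {x\<in>K. dist c x = r}" using contact_hull[OF K cmin] r_def by simp
  then obtain S u where S: "finite S" "S \<subseteq> {x\<in>K. dist c x = r}" "card S \<le> DIM('a) + 1"
    "\<And>x. x \<in> S \<Longrightarrow> 0 \<le> u x" "sum u S = 1" "(\<Sum>v\<in>S. u v *\<^sub>R v) = c"
    unfolding convex_hull_caratheodory by blast
  have Sne: "S \<noteq> {}" using S(5) by auto
  define m where "m = real (card S)"
  have m0: "m > 0" using S(1) Sne by (simp add: m_def card_gt_0_iff)
  obtain i where i: "i \<in> S" "u i \<ge> 1 / m"
  proof (rule ccontr)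
    assume "\<not> thesis"
    then have lt: "\<And>j. j \<in> S \<Longrightarrow> u j < 1 / m" using that by force
    have "sum u S < (\<Sum>j\<in>S. 1 / m)" using sum_strict_mono[OF S(1) Sne lt] by simp
    also have "\<dots> = 1" using m0 by (simp add: m_def)
    finally show False using S(5) by simp
  qed
  have z: "(\<Sum>j\<in>S. u j *\<^sub>R (j - c)) = 0"
  proof -
    have "(\<Sum>j\<in>S. u j *\<^sub>R (j - c)) = (\<Sum>j\<in>S. u j *\<^sub>R j) - (\<Sum>j\<in>S. u j *\<^sub>R c)"
      by (simp add: scaleR_diff_right sum_subtractf)
    also have "(\<Sum>j\<in>S. u j *\<^sub>R c) = (sum u S) *\<^sub>R c" by (simp add: scaleR_sum_left)
    finally show ?thesis using S(5,6) by simp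
  qed
  have rS: "\<And>j. j \<in> S \<Longrightarrow> (norm (j - c))^2 = r^2"
    using S(2) by (auto simp: dist_norm norm_minus_commute)
  have eq: "(\<Sum>j\<in>S. u j * (norm (i - j))^2) = 2 * r^2"
  proof -
    have nj: "\<And>j. j \<in> S \<Longrightarrow> (norm (i - j))^2 = 2 * r^2 - 2 * inner (i - c) (j - c)"
    proof -
      fix j assume j: "j \<in> S"
      have "i - j = (i - c) - (j - c)" by simp
      then have "(norm (i - j))^2 = (norm (i - c))^2 - 2 * inner (i - c) (j - c) + (norm (j - c))^2"
        using norm_diff_sq[of "i - c" "j - c"] by simp
      then show "(norm (i - j))^2 = 2 * r^2 - 2 * inner (i - c) (j - c)" using rS[OF j] rS[OF i(1)] by simp
    qed
    have "(\<Sum>j\<in>S. u j * (norm (i - j))^2) = (\<Sum>j\<in>S. 2 * r^2 * u j - 2 * (u j * inner (i - c) (j - c)))"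
    proof (rule sum.cong)
      fix j assume "j \<in> S"
      show "u j * (norm (i - j))^2 = 2 * r^2 * u j - 2 * (u j * inner (i - c) (j - c))"
        unfolding nj[OF \<open>j \<in> S\<close>] by (simp add: algebra_simps)
    qed simp
    also have "\<dots> = 2 * r^2 * sum u S - 2 * (\<Sum>j\<in>S. u j * inner (i - c) (j - c))"
      by (simp add: sum_subtractf sum_distrib_left)
    also have "(\<Sum>j\<in>S. u j * inner (i - c) (j - c)) = inner (i - c) (\<Sum>j\<in>S. u j *\<^sub>R (j - c))"
      by (simp add: inner_sum_right)
    finally show ?thesis using z S(5) by simp
  qed
  have D0: "D \<ge> 0" using D[of i i] i(1) S(2) by auto
  have le: "(\<Sum>j\<in>S. u j * (norm (i - j))^2) \<le> D^2 * (1 - u i)"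
  proof -
    have "(\<Sum>j\<in>S. u j * (norm (i - j))^2) = (\<Sum>j\<in>S - {i}. u j * (norm (i - j))^2)"
      using sum.remove[OF S(1) i(1), of "\<lambda>j. u j * (norm (i - j))^2"] by simp
    also have "\<dots> \<le> (\<Sum>j\<in>S - {i}. u j * D^2)"
    proof (rule sum_mono)
      fix j assume j: "j \<in> S - {i}"
      have "norm (i - j) \<le> D" using D[of i j] i(1) j S(2) by (auto simp: dist_norm)
      then have "(norm (i - j))^2 \<le> D^2" by (intro power_mono) auto
      then show "u j * (norm (i - j))^2 \<le> u j * D^2" using S(4)[of j] j by (intro mult_left_mono) auto
    qed
    also have "\<dots> = D^2 * (sum u S - u i)"
      using sum.remove[OF S(1) i(1), of u] by (simp add: sum_distrib_right[symmetric] algebra_simps)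
    finally show ?thesis using S(5) by simp
  qed
  have mn: "m \<le> n + 1" using S(3) by (simp add: m_def n_def)
  have "2 * r^2 \<le> D^2 * (1 - 1 / m)"
  proof -
    have "D^2 * (1 - u i) \<le> D^2 * (1 - 1/m)" using i(2) by (intro mult_left_mono) auto
    then show ?thesis using eq le by simp
  qed
  also have "\<dots> \<le> D^2 * (1 - 1 / (n + 1))"
  proof -
    have "1 / (n+1) \<le> 1 / m" using m0 mn by (intro divide_left_mono) auto
    then show ?thesis by (intro mult_left_mono) auto
  qed
  also have "\<dots> = D^2 * (n / (n + 1))"
  proof -
    have "n + 1 > 0" by (simp add: n_def)
    then show ?thesis by (simp add: field_simps)
  qed
  finally have h: "2 * r^2 \<le> D^2 * (n / (n + 1))" .
  have E: "D^2 * (n / (n + 1)) / 2 = D^2 * (n / (2 * (n + 1)))" by simp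
  have r2: "r^2 \<le> D^2 * (n / (2 * (n + 1)))" by (rule ord_le_eq_trans[OF half_le[OF h] E])
  have "i \<in> K" using i(1) S(2) by blast
  then have "dist c i \<le> r" using gmax_props(2)[OF K, of i c] r_def by simp
  then have r0: "r \<ge> 0" using zero_le_dist[of c i] by linarith
  have "r = sqrt (r^2)" using r0 by simp
  also have "\<dots> \<le> sqrt (D^2 * (n / (2 * (n + 1))))" using r2 by (rule real_sqrt_le_mono)
  also have "\<dots> = sqrt (D^2) * sqrt (n / (2 * (n + 1)))" by (rule real_sqrt_mult)
  also have "\<dots> = sqrt (n / (2 * (n + 1))) * D" using D0 by simp
  finally have "r \<le> sqrt (n / (2 * (n + 1))) * D" .
  then have "\<forall>x\<in>K. dist c x \<le> sqrt (n / (2 * (n + 1))) * D"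
    using gmax_props(2)[OF K] r_def by (blast intro: order_trans)
  then show ?thesis unfolding n_def by blast
qed



lemma play_len: "length (play Q A n) = n"
  by (induction n) (simp_all add: Let_def)

lemma play_valid:
  assumes "valid_adversary \<delta> x A"
  shows "k < n \<Longrightarrow> \<bar>play Q A n ! k - inner x (Q (take k (play Q A n)))\<bar> \<le> \<delta>"
proof (induction n arbitrary: k)
  case 0 then show ?case by simp
next
  case (Suc n)
  define rs where "rs = play Q A n"
  define a where "a = A (map (\<lambda>i. Q (take i rs)) [0..<Suc n])"
  have lrs: "length rs = n" by (simp add: rs_def play_len)
  have ps: "play Q A (Suc n) = rs @ [a]" by (simp add: rs_def a_def Let_def)
  have lastq: "last (map (\<lambda>i. Q (take i rs)) [0..<Suc n]) = Q rs" using lrs by simp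
  have va: "\<bar>a - inner x (Q rs)\<bar> \<le> \<delta>"
  proof -
    have ne: "map (\<lambda>i. Q (take i rs)) [0..<Suc n] \<noteq> []" by simp
    have "\<bar>A (map (\<lambda>i. Q (take i rs)) [0..<Suc n]) - inner x (last (map (\<lambda>i. Q (take i rs)) [0..<Suc n]))\<bar> \<le> \<delta>"
      using assms ne unfolding valid_adversary_def by blast
    then show ?thesis using lastq by (simp add: a_def)
  qed
  show ?case
  proof (cases "k < n")
    case True
    have "(rs @ [a]) ! k = rs ! k" using True lrs by (simp add: nth_append)
    moreover have "take k (rs @ [a]) = take k rs" using True lrs by simp
    ultimately show ?thesis unfolding ps using Suc.IH[OF True] rs_def by simp
  next
    case False
    then have "k = n" using Suc.prems by simp
    then show ?thesis unfolding ps using va lrs by (simp add: nth_append)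
  qed
qed

lemma play_cong:
  assumes "valid_reconstructor Q" "\<And>qs. qs \<noteq> [] \<Longrightarrow> norm (last qs) = 1 \<Longrightarrow> A qs = B qs"
  shows "play Q A n = play Q B n"
proof (induction n)
  case 0 then show ?case by simp
next
  case (Suc n)
  define rs where "rs = play Q A n"
  have lrs: "length rs = n" by (simp add: rs_def play_len)
  have lastq: "last (map (\<lambda>i. Q (take i rs)) [0..<Suc n]) = Q rs" using lrs by simp
  have "norm (Q rs) = 1" using assms(1) by (simp add: valid_reconstructor_def)
  then have "A (map (\<lambda>i. Q (take i rs)) [0..<Suc n]) = B (map (\<lambda>i. Q (take i rs)) [0..<Suc n])"
    using assms(2) lastq by simp
  then show ?case using Suc.IH by (simp add: Let_def rs_def)
qed

lemma net_exists:
  assumes "(0::real) < \<epsilon>"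
  shows "\<exists>N::(real^'d) set. finite N \<and> N \<subseteq> sphere 0 1 \<and> N \<noteq> {} \<and> (\<forall>w\<in>sphere 0 1. \<exists>v\<in>N. dist w v < \<epsilon>)"
proof -
  have "sphere (0::real^'d) 1 \<subseteq> (\<Union>c\<in>sphere 0 1. ball c \<epsilon>)" using assms by force
  then obtain N where N: "N \<subseteq> sphere (0::real^'d) 1" "finite N" "sphere (0::real^'d) 1 \<subseteq> (\<Union>c\<in>N. ball c \<epsilon>)"
    using compactE_image[OF compact_sphere, of "sphere 0 1" "\<lambda>c. ball c \<epsilon>"] by blast
  obtain i :: 'd where True by simp
  have "axis i (1::real) \<in> sphere 0 1" by simp
  then have "N \<noteq> {}" using N(3) by blast
  moreover have "\<forall>w\<in>sphere 0 1. \<exists>v\<in>N. dist w v < \<epsilon>"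
    using N(3) by (force simp: dist_commute)
  ultimately show ?thesis using N by blast
qed

lemma net_diam:
  fixes N :: "(real^'d) set"
  assumes net: "\<forall>w\<in>sphere 0 1. \<exists>v\<in>N. dist w v < \<epsilon>" and e1: "\<epsilon> < 1" and d0: "\<delta> > 0"
    and hv: "\<And>v. v \<in> N \<Longrightarrow> \<bar>inner (x - y) v\<bar> \<le> 2 * \<delta>"
  shows "dist x y \<le> 2 * \<delta> / (1 - \<epsilon>)"
proof (cases "x = y")
  case True then show ?thesis using d0 e1 by simp
next
  case False
  define z where "z = x - y"
  have nz: "norm z > 0" using False by (simp add: z_def)
  define w where "w = (1 / norm z) *\<^sub>R z"
  have "w \<in> sphere 0 1" using nz by (simp add: w_def)
  then obtain v where v: "v \<in> N" "dist w v < \<epsilon>" using net by blast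
  have "norm z = inner z w" using nz by (simp add: w_def power2_norm_eq_inner[symmetric] power2_eq_square)
  also have "\<dots> = inner z v + inner z (w - v)" by (simp add: inner_diff_right)
  also have "\<dots> \<le> 2 * \<delta> + norm z * \<epsilon>"
  proof -
    have "inner z v \<le> 2 * \<delta>" using hv[OF v(1)] by (simp add: z_def)
    moreover have "inner z (w - v) \<le> norm z * norm (w - v)" by (rule norm_cauchy_schwarz)
    moreover have "norm z * norm (w - v) \<le> norm z * \<epsilon>"
      using v(2) nz by (simp add: dist_norm)
    ultimately show ?thesis by linarith
  qed
  finally have "norm z * (1 - \<epsilon>) \<le> 2 * \<delta>" by (simp add: algebra_simps)
  then show ?thesis using e1 by (simp add: z_def dist_norm field_simps)
qed

lemma upper_bound:
  fixes \<delta> \<epsilon> :: real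
  assumes d0: "\<delta> > 0" and e0: "0 < \<epsilon>" and e1: "\<epsilon> < 1"
  shows "\<exists>T0. \<forall>T\<ge>T0. OPT TYPE('d::finite) T \<delta> \<le>
           ereal (sqrt (real CARD('d) / (2 * (real CARD('d) + 1))) * (2 * \<delta> / (1 - \<epsilon>)))"
proof -
  define D where "D = 2 * \<delta> / (1 - \<epsilon>)"
  define \<rho> where "\<rho> = sqrt (real CARD('d) / (2 * (real CARD('d) + 1))) * D"
  obtain N :: "(real^'d) set" where N: "finite N" "N \<subseteq> sphere 0 1" "N \<noteq> {}"
    "\<forall>w\<in>sphere 0 1. \<exists>v\<in>N. dist w v < \<epsilon>"
    using net_exists[OF e0] by blast
  obtain L where L: "set L = N" using finite_list[OF N(1)] by blast
  define len where "len = length L"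
  have len0: "len > 0" using L N(3) by (cases L) (auto simp: len_def)
  define Qs :: "real list \<Rightarrow> real^'d" where "Qs rs = L ! (length rs mod len)" for rs
  define Kset :: "real list \<Rightarrow> (real^'d) set" where
    "Kset rs = {y. \<forall>k<length rs. \<bar>rs ! k - inner y (L ! (k mod len))\<bar> \<le> \<delta>}" for rs
  define outs :: "real list \<Rightarrow> real^'d" where
    "outs rs = (SOME c. \<forall>y\<in>Kset rs. dist c y \<le> \<rho>)" for rs
  have vQ: "valid_reconstructor Qs"
    unfolding valid_reconstructor_def
  proof
    fix rs :: "real list"
    have "length rs mod len < length L" using len0 by (simp add: len_def)
    then have "Qs rs \<in> N" unfolding Qs_def using L nth_mem by blast
    then show "norm (Qs rs) = 1" using N(2) by auto
  qed
  have key: "norm (outs (play Qs A T) - x) \<le> \<rho>"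
    if T: "T \<ge> len" and vA: "valid_adversary \<delta> x A"
    for T and x :: "real^'d" and A :: "(real^'d) list \<Rightarrow> real"
  proof -
    define rs where "rs = play Qs A T"
    have lrs: "length rs = T" by (simp add: rs_def play_len)
    have xK: "x \<in> Kset rs"
      unfolding Kset_def
    proof (intro CollectI allI impI)
      fix k assume k: "k < length rs"
      have "Qs (take k rs) = L ! (k mod len)" using k by (simp add: Qs_def)
      then show "\<bar>rs ! k - inner x (L ! (k mod len))\<bar> \<le> \<delta>"
        using play_valid[OF vA, of k T Qs] k lrs rs_def by simp
    qed
    have diam: "dist y z \<le> D" if y: "y \<in> Kset rs" and z: "z \<in> Kset rs" for y z
      unfolding D_def
    proof (rule net_diam[OF N(4) e1 d0])
      fix v assume "v \<in> N"
      then obtain j where j: "j < len" "L ! j = v" using L by (auto simp: in_set_conv_nth len_def)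
      have jT: "j < length rs" using j T lrs by simp
      have jm: "j mod len = j" using j by simp
      have "\<bar>rs ! j - inner y v\<bar> \<le> \<delta>" using y jT j jm by (auto simp: Kset_def)
      moreover have "\<bar>rs ! j - inner z v\<bar> \<le> \<delta>" using z jT j jm by (auto simp: Kset_def)
      ultimately show "\<bar>inner (y - z) v\<bar> \<le> 2 * \<delta>" by (simp add: inner_diff_left abs_le_iff)
    qed
    have cl: "closed (Kset rs)"
    proof -
      have "Kset rs = (\<Inter>k\<in>{..<length rs}. {y. \<bar>rs ! k - inner y (L ! (k mod len))\<bar> \<le> \<delta>})"
        by (auto simp: Kset_def)
      moreover have "closed {y. \<bar>rs ! k - inner y (L ! (k mod len))\<bar> \<le> \<delta>}" for k
        by (intro closed_Collect_le continuous_intros)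
      ultimately show ?thesis by auto
    qed
    have bd: "bounded (Kset rs)"
    proof -
      have "Kset rs \<subseteq> cball x D" using diam xK by auto
      then show ?thesis using bounded_cball bounded_subset by blast
    qed
    have cK: "compact (Kset rs)" using cl bd by (simp add: compact_eq_bounded_closed)
    have "Kset rs \<noteq> {}" using xK by auto
    from jung[OF cK this diam]
    have "\<exists>c. \<forall>y\<in>Kset rs. dist c y \<le> \<rho>" by (simp add: \<rho>_def)
    then have "\<forall>y\<in>Kset rs. dist (outs rs) y \<le> \<rho>" unfolding outs_def by (rule someI_ex)
    then have "dist (outs rs) x \<le> \<rho>" using xK by blast
    then show ?thesis by (simp add: rs_def dist_norm)
  qed
  show ?thesis
  proof (intro exI allI impI)
    fix T assume T: "len \<le> T"
    have "OPT TYPE('d) T \<delta> \<le> (SUP xA \<in> {(x :: real^'d, A). valid_adversary \<delta> x A}.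
           ereal (norm (outs (play Qs (snd xA) T) - fst xA)))"
      unfolding OPT_def by (rule INF_lower2[of "(Qs, outs)"]) (use vQ in auto)
    also have "\<dots> \<le> ereal \<rho>"
    proof (rule SUP_least)
      fix xA assume "xA \<in> {(x :: real^'d, A). valid_adversary \<delta> x A}"
      then obtain x A where "xA = (x, A)" "valid_adversary \<delta> x A" by auto
      then show "ereal (norm (outs (play Qs (snd xA) T) - fst xA)) \<le> ereal \<rho>"
        using key[OF T] by simp
    qed
    finally show "OPT TYPE('d) T \<delta> \<le> ereal (sqrt (real CARD('d) / (2 * (real CARD('d) + 1))) * (2 * \<delta> / (1 - \<epsilon>)))"
      by (simp add: \<rho>_def D_def)
  qed
qed

lemma quad_nonneg:
  fixes n t k S Y :: real
  assumes n0: "n > 0" and ht: "n * t^2 = 2 * t + 1" and SY: "S^2 \<le> n * Y"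
  shows "(n + 1) * Y - 2 * k * (1 + t) * S + k^2 * (2 * t + 1) \<ge> 0"
proof -
  define X where "X = (n + 1) * Y - 2 * k * (1 + t) * S + k^2 * (2 * t + 1)"
  have ht': "n * (t * t) = 2 * t + 1" using ht by (simp add: power2_eq_square)
  have eq: "(n + 1) * ((n + 1) * S^2 - 2 * n * k * (1 + t) * S + n * k^2 * (2 * t + 1)) = ((n + 1) * S - n * k * (1 + t))^2"
    using ht' by algebra
  have "n * X - ((n + 1) * S^2 - 2 * n * k * (1 + t) * S + n * k^2 * (2 * t + 1)) = (n + 1) * (n * Y - S^2)"
    by (simp add: X_def algebra_simps power2_eq_square)
  moreover have "(n + 1) * (n * Y - S^2) \<ge> 0" using SY n0 by simp
  ultimately have "n * X \<ge> (n + 1) * S^2 - 2 * n * k * (1 + t) * S + n * k^2 * (2 * t + 1)" by linarith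
  moreover have "(n + 1) * S^2 - 2 * n * k * (1 + t) * S + n * k^2 * (2 * t + 1) \<ge> 0"
  proof -
    have "(n + 1) * ((n + 1) * S^2 - 2 * n * k * (1 + t) * S + n * k^2 * (2 * t + 1)) \<ge> 0"
      unfolding eq by simp
    then show ?thesis using n0 by (simp add: zero_le_mult_iff)
  qed
  ultimately have "n * X \<ge> 0" by linarith
  then have "X \<ge> 0" using n0 by (simp add: zero_le_mult_iff)
  then show ?thesis by (simp add: X_def)
qed

definition onev :: "real^'d" where "onev = (\<chi> i. 1)"

lemma onev_norm2: "(norm (onev :: real^'d))^2 = real CARD('d)"
  by (simp add: power2_norm_eq_inner inner_vec_def onev_def)

lemma inner_onev: "inner y (onev :: real^'d) = (\<Sum>i\<in>UNIV. y $ i)"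
  by (simp add: inner_vec_def onev_def)

lemma inner_axis_onev: "inner (axis i 1) (onev :: real^'d) = 1"
  by (simp add: inner_axis' onev_def)

definition tpar :: "'d::finite itself \<Rightarrow> real" where
  "tpar _ = (1 + sqrt (real CARD('d) + 1)) / real CARD('d)"

lemma tpar_eq: "real CARD('d::finite) * (tpar TYPE('d))^2 = 2 * tpar TYPE('d) + 1"
proof -
  define n where "n = real CARD('d)"
  have n0: "n > 0" by (simp add: n_def)
  have s: "(sqrt (n + 1))^2 = n + 1" using n0 by simp
  have "n * ((1 + sqrt (n + 1)) / n)^2 = (1 + sqrt (n + 1))^2 / n" using n0 by (simp add: power2_eq_square)
  also have "\<dots> = (n + 2 + 2 * sqrt (n + 1)) / n" using s by (simp add: power2_eq_square algebra_simps)
  also have "\<dots> = 2 * ((1 + sqrt (n + 1)) / n) + 1" using n0 by (simp add: field_simps)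
  finally show ?thesis by (simp add: tpar_def n_def)
qed

definition pt :: "real \<Rightarrow> 'd::finite option \<Rightarrow> real^'d" where
  "pt \<delta> w = (case w of None \<Rightarrow> (sqrt 2 * \<delta> * tpar TYPE('d)) *\<^sub>R onev | Some i \<Rightarrow> (sqrt 2 * \<delta>) *\<^sub>R axis i 1)"

lemma pt_dist:
  assumes "\<delta> > 0"
  shows "norm (pt \<delta> o1 - pt \<delta> o2 :: real^'d::finite) \<le> 2 * \<delta>"
proof -
  define k where "k = sqrt 2 * \<delta>"
  define t where "t = tpar TYPE('d)"
  have k2: "k^2 = 2 * \<delta>^2" by (simp add: k_def power_mult_distrib)
  have ht: "real CARD('d) * t^2 = 2 * t + 1" using tpar_eq by (simp add: t_def)
  have sq: "(norm (pt \<delta> o1 - pt \<delta> o2 :: real^'d))^2 \<le> (2 * \<delta>)^2"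
  proof -
    have a: "(norm (k *\<^sub>R axis i 1 - k *\<^sub>R axis j 1 :: real^'d))^2 \<le> (2 * \<delta>)^2" for i j
    proof -
      have "(norm (k *\<^sub>R axis i 1 - k *\<^sub>R axis j 1 :: real^'d))^2 = k^2 * (norm (axis i 1 - axis j 1 :: real^'d))^2"
        by (simp add: scaleR_diff_right[symmetric] power_mult_distrib)
      also have "(norm (axis i 1 - axis j 1 :: real^'d))^2 = 2 - 2 * (if i = j then 1 else 0)"
        by (simp add: norm_diff_sq inner_axis_axis)
      finally show ?thesis using k2 by (auto simp: power_mult_distrib)
    qed
    have b: "(norm (k *\<^sub>R axis i 1 - (k * t) *\<^sub>R onev :: real^'d))^2 = (2 * \<delta>)^2" for i
    proof -
      have e: "k *\<^sub>R axis i 1 - (k * t) *\<^sub>R onev = k *\<^sub>R (axis i 1 - t *\<^sub>R (onev :: real^'d))"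
        by (simp add: scaleR_diff_right)
      have "(norm (k *\<^sub>R (axis i 1 - t *\<^sub>R (onev :: real^'d))))^2 = k^2 * (norm (axis i 1 - t *\<^sub>R onev :: real^'d))^2"
        by (simp only: norm_scaleR power_mult_distrib power2_abs)
      then have "(norm (k *\<^sub>R axis i 1 - (k * t) *\<^sub>R onev :: real^'d))^2 = k^2 * (norm (axis i 1 - t *\<^sub>R onev :: real^'d))^2"
        by (simp only: e)
      also have "(norm (axis i 1 - t *\<^sub>R onev :: real^'d))^2 = 1 - 2 * t + t^2 * real CARD('d)"
        by (simp add: norm_diff_sq inner_axis_onev power_mult_distrib onev_norm2)
      also have "\<dots> = 2" using ht by (simp add: algebra_simps)
      finally show ?thesis using k2 by (simp add: power_mult_distrib)
    qed
    have pN: "pt \<delta> None = (k * t) *\<^sub>R (onev :: real^'d)" by (simp add: pt_def k_def t_def)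
    have pS: "pt \<delta> (Some i) = k *\<^sub>R (axis i 1 :: real^'d)" for i by (simp add: pt_def k_def)
    show ?thesis
    proof (cases o1)
      case None
      show ?thesis
      proof (cases o2)
        case None
        then show ?thesis using \<open>o1 = None\<close> by simp
      next
        case (Some j)
        have "norm (pt \<delta> o1 - pt \<delta> o2) = norm (pt \<delta> o2 - pt \<delta> o1)" by (rule norm_minus_commute)
        then show ?thesis using b[of j] \<open>o1 = None\<close> Some pN pS by simp
      qed
    next
      case (Some i)
      show ?thesis
      proof (cases o2)
        case None
        then show ?thesis using b[of i] \<open>o1 = Some i\<close> pN pS by simp
      next
        case (Some j)
        then show ?thesis using a[of i j] \<open>o1 = Some i\<close> pS by simp
      qed
    qed
  qed
  show ?thesis by (rule power2_le_imp_le[OF sq]) (use assms in simp)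
qed

lemma far_point:
  fixes y :: "real^'d::finite"
  assumes d0: "\<delta> > 0"
  shows "\<exists>w. norm (y - pt \<delta> w) \<ge> sqrt (2 * real CARD('d) / (real CARD('d) + 1)) * \<delta>"
proof (rule ccontr)
  define n where "n = real CARD('d)"
  define k where "k = sqrt 2 * \<delta>"
  define t where "t = tpar TYPE('d)"
  define Lv where "Lv = sqrt (2 * n / (n + 1)) * \<delta>"
  define Y where "Y = (norm y)^2"
  define S where "S = inner y (onev :: real^'d)"
  have n0: "n > 0" by (simp add: n_def)
  have k2: "k^2 = 2 * \<delta>^2" by (simp add: k_def power_mult_distrib)
  have ht: "n * t^2 = 2 * t + 1" using tpar_eq by (simp add: t_def n_def)
  assume "\<not> ?thesis"
  then have lt: "norm (y - pt \<delta> w) < Lv" for w by (simp add: Lv_def n_def not_le)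
  have lt2: "(norm (y - pt \<delta> w))^2 < Lv^2" for w
    using lt[of w] by (intro power_strict_mono) auto
  have Lv2: "(n + 1) * Lv^2 = n * k^2"
  proof -
    have "Lv^2 = (2 * n / (n + 1)) * \<delta>^2" using n0 by (simp add: Lv_def power_mult_distrib)
    then show ?thesis using n0 k2 by (simp add: field_simps)
  qed
  have f1: "(norm (y - pt \<delta> (Some i)))^2 = Y - 2 * k * (y $ i) + k^2" for i
  proof -
    have "(norm (y - pt \<delta> (Some i)))^2 = (norm y)^2 - 2 * inner y (k *\<^sub>R axis i 1) + (norm (k *\<^sub>R (axis i 1 :: real^'d)))^2"
      unfolding pt_def k_def by (simp only: option.case norm_diff_sq)
    also have "inner y (k *\<^sub>R axis i 1) = k * (y $ i)" by (simp add: inner_axis)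
    also have "(norm (k *\<^sub>R (axis i 1 :: real^'d)))^2 = k^2" by (simp add: power_mult_distrib)
    finally show ?thesis by (simp add: Y_def)
  qed
  have f2: "(norm (y - pt \<delta> None))^2 = Y - 2 * k * t * S + k^2 * t^2 * n"
  proof -
    have "(norm (y - pt \<delta> None))^2 = (norm y)^2 - 2 * inner y ((k * t) *\<^sub>R onev) + (norm ((k * t) *\<^sub>R (onev :: real^'d)))^2"
      unfolding pt_def k_def t_def by (simp only: option.case norm_diff_sq)
    also have "inner y ((k * t) *\<^sub>R onev) = k * t * S" by (simp add: S_def)
    also have "(norm ((k * t) *\<^sub>R (onev :: real^'d)))^2 = k^2 * t^2 * n"
      by (simp add: power_mult_distrib onev_norm2 n_def)
    finally show ?thesis by (simp add: Y_def)
  qed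
  have s1: "(\<Sum>i\<in>UNIV. (norm (y - pt \<delta> (Some i)))^2) = n * Y - 2 * k * S + n * k^2"
  proof -
    have "(\<Sum>i\<in>UNIV. (norm (y - pt \<delta> (Some i)))^2) = (\<Sum>i\<in>(UNIV::'d set). Y + k^2 - 2 * k * (y $ i))"
      by (simp add: f1 algebra_simps)
    also have "\<dots> = n * (Y + k^2) - 2 * k * (\<Sum>i\<in>UNIV. y $ i)"
      by (simp add: sum_subtractf sum_distrib_left n_def)
    also have "(\<Sum>i\<in>UNIV. y $ i) = S" by (simp add: S_def inner_onev)
    finally show ?thesis by (simp add: algebra_simps)
  qed
  have SY: "S^2 \<le> n * Y"
  proof -
    have "\<bar>S\<bar> \<le> norm y * norm (onev :: real^'d)" unfolding S_def by (rule Cauchy_Schwarz_ineq2)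
    then have "S^2 \<le> (norm y * norm (onev :: real^'d))^2"
      by (metis abs_ge_zero power2_abs power_mono)
    also have "\<dots> = Y * n" by (simp add: power_mult_distrib onev_norm2 Y_def n_def)
    finally show ?thesis by (simp add: mult.commute)
  qed
  have q: "(n + 1) * Y - 2 * k * (1 + t) * S + k^2 * (2 * t + 1) \<ge> 0"
    by (rule quad_nonneg[OF n0 ht SY])
  have tot: "(\<Sum>i\<in>UNIV. (norm (y - pt \<delta> (Some i)))^2) + (norm (y - pt \<delta> None))^2 \<ge> n * k^2"
  proof -
    have "k^2 * t^2 * n = k^2 * (2 * t + 1)" using ht by (simp add: mult.commute mult.left_commute)
    then show ?thesis unfolding s1 f2 using q by (simp add: algebra_simps)
  qed
  have "(\<Sum>i\<in>UNIV. (norm (y - pt \<delta> (Some i)))^2) < (\<Sum>i\<in>(UNIV::'d set). Lv^2)"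
    by (rule sum_strict_mono) (auto intro: lt2)
  also have "\<dots> = n * Lv^2" by (simp add: n_def)
  finally have "(\<Sum>i\<in>UNIV. (norm (y - pt \<delta> (Some i)))^2) + (norm (y - pt \<delta> None))^2 < n * Lv^2 + Lv^2"
    using lt2[of None] by linarith
  also have "n * Lv^2 + Lv^2 = n * k^2" using Lv2 by (simp add: algebra_simps)
  finally show False using tot by simp
qed

definition midp :: "real \<Rightarrow> real^'d::finite \<Rightarrow> real" where
  "midp \<delta> v = (Max ((\<lambda>p. inner p v) ` range (pt \<delta>)) + Min ((\<lambda>p. inner p v) ` range (pt \<delta>))) / 2"

lemma midp_ok:
  fixes v :: "real^'d::finite"
  assumes d0: "\<delta> > 0" and v: "norm v = 1"
  shows "\<bar>midp \<delta> v - inner (pt \<delta> w) v\<bar> \<le> \<delta>"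
proof -
  define I where "I = (\<lambda>p. inner p v) ` range (pt \<delta> :: 'd option \<Rightarrow> real^'d)"
  have fI: "finite I" by (simp add: I_def)
  have nI: "I \<noteq> {}" by (simp add: I_def)
  have IE: "\<And>z. z \<in> I \<Longrightarrow> \<exists>w. z = inner (pt \<delta> w) v" unfolding I_def by auto
  obtain w1 where w1: "Max I = inner (pt \<delta> w1) v" using IE[OF Max_in[OF fI nI]] by blast
  obtain w2 where w2: "Min I = inner (pt \<delta> w2) v" using IE[OF Min_in[OF fI nI]] by blast
  have le1: "inner (pt \<delta> w) v \<le> Max I" using fI by (auto simp: I_def intro!: Max_ge)
  have le2: "Min I \<le> inner (pt \<delta> w) v" using fI by (auto simp: I_def intro!: Min_le)
  have "Max I - Min I = inner (pt \<delta> w1 - pt \<delta> w2) v" by (simp add: w1 w2 inner_diff_left)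
  also have "\<dots> \<le> norm (pt \<delta> w1 - pt \<delta> w2) * norm v" by (rule norm_cauchy_schwarz)
  also have "\<dots> \<le> 2 * \<delta>" using pt_dist[OF d0, of w1 w2] v by simp
  finally have "Max I - Min I \<le> 2 * \<delta>" .
  then show ?thesis using le1 le2 unfolding midp_def I_def[symmetric] by (simp add: abs_le_iff field_simps)
qed

lemma lower_bound:
  assumes d0: "\<delta> > 0"
  shows "ereal (sqrt (2 * real CARD('d) / (real CARD('d) + 1)) * \<delta>) \<le> OPT TYPE('d::finite) T \<delta>"
  unfolding OPT_def
proof (rule INF_greatest)
  fix QO :: "(real list \<Rightarrow> real^'d) \<times> (real list \<Rightarrow> real^'d)"
  assume "QO \<in> {(Q, out). valid_reconstructor Q}"
  then obtain Q out where QO: "QO = (Q, out)" and vQ: "valid_reconstructor Q" by auto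
  define B :: "(real^'d) list \<Rightarrow> real" where "B qs = midp \<delta> (last qs)" for qs
  define y where "y = out (play Q B T)"
  obtain w where w: "norm (y - pt \<delta> w) \<ge> sqrt (2 * real CARD('d) / (real CARD('d) + 1)) * \<delta>"
    using far_point[OF d0] by blast
  define x where "x = pt \<delta> w"
  define A :: "(real^'d) list \<Rightarrow> real" where
    "A qs = (if norm (last qs) = 1 then midp \<delta> (last qs) else inner x (last qs))" for qs
  have vA: "valid_adversary \<delta> x A"
    unfolding valid_adversary_def
  proof (intro allI impI)
    fix qs :: "(real^'d) list" assume "qs \<noteq> []"
    show "\<bar>A qs - inner x (last qs)\<bar> \<le> \<delta>"
    proof (cases "norm (last qs) = 1")
      case True then show ?thesis using midp_ok[OF d0 True, of w] by (simp add: A_def x_def)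
    next
      case False then show ?thesis using d0 by (simp add: A_def)
    qed
  qed
  have pe: "play Q A T = play Q B T"
    by (rule play_cong[OF vQ]) (simp add: A_def B_def)
  have "ereal (sqrt (2 * real CARD('d) / (real CARD('d) + 1)) * \<delta>) \<le> ereal (norm (out (play Q A T) - x))"
    using w by (simp add: pe y_def x_def)
  also have "\<dots> \<le> (SUP xA \<in> {(x :: real^'d, A). valid_adversary \<delta> x A}. ereal (norm (snd QO (play (fst QO) (snd xA) T) - fst xA)))"
    by (rule SUP_upper2[of "(x, A)"]) (use vA QO in auto)
  finally show "ereal (sqrt (2 * real CARD('d) / (real CARD('d) + 1)) * \<delta>) \<le> (SUP xA \<in> {(x :: real^'d, A). valid_adversary \<delta> x A}. ereal (norm (snd QO (play (fst QO) (snd xA) T) - fst xA)))" .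
qed

theorem theorem1:
  fixes \<delta> :: real
  assumes "\<delta> > 0"
  shows "((\<lambda>T. OPT TYPE('d::finite) T \<delta>) \<longlongrightarrow>
            ereal (sqrt (2 * real CARD('d) / (real CARD('d) + 1)) * \<delta>)) sequentially"
proof -
  define n where "n = real CARD('d)"
  define Lv where "Lv = sqrt (2 * n / (n + 1)) * \<delta>"
  define c0 where "c0 = sqrt (n / (2 * (n + 1)))"
  have n0: "n > 0" by (simp add: n_def)
  have Lv0: "Lv > 0" using n0 assms by (simp add: Lv_def)
  have c0L: "c0 * (2 * \<delta>) = Lv"
  proof -
    have eq: "2 * n / (n + 1) = 2^2 * (n / (2 * (n + 1)))" using n0 by (simp add: field_simps power2_eq_square)
    have "sqrt (2 * n / (n + 1)) = sqrt (2^2) * sqrt (n / (2 * (n + 1)))" by (simp only: eq real_sqrt_mult)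
    then have "sqrt (2 * n / (n + 1)) = 2 * c0" by (simp add: c0_def)
    then show ?thesis by (simp add: Lv_def)
  qed
  show ?thesis
    unfolding n_def[symmetric] Lv_def[symmetric]
  proof (rule order_tendstoI)
    fix a assume "a < ereal Lv"
    have "a < OPT TYPE('d) T \<delta>" for T
      using \<open>a < ereal Lv\<close> lower_bound[OF assms, where 'd='d, of T] by (simp add: Lv_def n_def)
    then show "\<forall>\<^sub>F T in sequentially. a < OPT TYPE('d) T \<delta>" by simp
  next
    fix b assume "ereal Lv < b"
    then obtain z where z: "Lv < z" "ereal z < b" using ereal_dense2[OF \<open>ereal Lv < b\<close>] by auto
    define \<epsilon> where "\<epsilon> = (z - Lv) / (z + Lv)"
    have e0: "0 < \<epsilon>" using z Lv0 by (simp add: \<epsilon>_def)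
    have e1: "\<epsilon> < 1" using z Lv0 by (simp add: \<epsilon>_def)
    obtain T0 where T0: "\<And>T. T \<ge> T0 \<Longrightarrow> OPT TYPE('d) T \<delta> \<le> ereal (c0 * (2 * \<delta> / (1 - \<epsilon>)))"
      using upper_bound[OF assms e0 e1] by (auto simp: c0_def n_def)
    have e: "1 - \<epsilon> = 2 * Lv / (z + Lv)" using z Lv0 by (simp add: \<epsilon>_def field_simps)
    have "c0 * (2 * \<delta> / (1 - \<epsilon>)) = (c0 * (2 * \<delta>)) / (1 - \<epsilon>)" by simp
    also have "\<dots> = Lv / (2 * Lv / (z + Lv))" by (simp only: c0L e)
    also have "\<dots> = (z + Lv) / 2" using Lv0 z by (simp add: field_simps)
    also have "\<dots> < z" using z by simp
    finally have lt: "c0 * (2 * \<delta> / (1 - \<epsilon>)) < z" .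
    show "\<forall>\<^sub>F T in sequentially. OPT TYPE('d) T \<delta> < b"
    proof (rule eventually_sequentiallyI[of T0])
      fix T assume "T0 \<le> T"
      then have "OPT TYPE('d) T \<delta> \<le> ereal (c0 * (2 * \<delta> / (1 - \<epsilon>)))" by (rule T0)
      also have "\<dots> < ereal z" using lt by simp
      also have "\<dots> < b" by (rule z(2))
      finally show "OPT TYPE('d) T \<delta> < b" .
    qed
  qed
qed

end
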